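(* Let $H$ be a definite Hamiltonian on $(a,b)$ in the limit circle case, let $c>0$, $r_0:=\bigl(\frac{c}{\det\Omega(a,b)}\bigr)^{\frac12}$, and let $(\hat t,\hat s)$ be the unique compatible pair for $H,r_0$ with constants $c,c$. Let $r>r_0$, and assume that we have points $s_0,\ldots,s_k$ such that $a \le s_0 < s_1 < \cdots < s_k \le b$ and \[ \det\Omega(s_{j-1},s_j) \ge \frac{c}{r^2}, \qquad j\in\{1,\ldots,k\}. \] Then \[ \int_{s_1}^{s_k} \frac{h_1(t)}{\omega_{1}(\hat s(t;r),t)}\,\mathrm{d}t \ge k\log 2 - \Bigl[\log r+\log\frac{\operatorname{tr}\Omega(s_0,s_k)}{\sqrt c}\Bigr]. \]
   Context: Let $-\infty<a<b\le\infty$. A Hamiltonian on $(a,b)$ is a measurable $H:(a,b)\to\mathbb{R}^{2\times 2}$, locally integrable on $(a,c)$ for $c<b$, with $H(t)\ge0$ a.e. and $\{H=0\}$ null; $H=\begin{pmatrix}h_1&h_3\\ h_3&h_2\end{pmatrix}$. It is in the limit circle case if $\int_a^b\operatorname{tr}H<\infty$, and definite if there is no $\phi$ with $H(t)=\operatorname{tr}H(t)\,\xi_\phi\xi_\phi^T$ a.e. on $(a,b)$, $\xi_\phi=(\cos\phi,\sin\phi)^T$. Set $\Omega(s,t)=\int_s^tH(u)\,\mathrm{d}u$, $\omega_1(s,t)=\int_s^th_1$. The unique compatible pair $(\hat t,\hat s)$ for $H,r_0$ with constants $c,c$ is given by $\det\Omega(a,\hat t(r))=\frac{c}{r^2}$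 for $r>r_0$ and, for $t\ge\hat t(r)$, $\hat s(t;r)\le t$ with $\det\Omega(\hat s(t;r),t)=\frac{c}{r^2}$. *)

theory Defs
  imports "HOL-Analysis.Analysis"
begin

text \<open>A Hamiltonian is given by its entries: H = [[h1, h3], [h3, h2]].
  Endpoints of intervals are extended reals (b may be +infinity).\<close>

definition eivl :: "ereal \<Rightarrow> ereal \<Rightarrow> real set" where
  "eivl s t = {u. s < ereal u \<and> ereal u < t}"

definition Om :: "(real \<Rightarrow> real) \<Rightarrow> ereal \<Rightarrow> ereal \<Rightarrow> real" where
  "Om h s t = (LINT u:eivl s t|lborel. h u)"

definition detOm :: "(real \<Rightarrow> real) \<Rightarrow> (real \<Rightarrow> real) \<Rightarrow> (real \<Rightarrow> real) \<Rightarrow> ereal \<Rightarrow> ereal \<Rightarrow> real" where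
  "detOm h1 h2 h3 s t = Om h1 s t * Om h2 s t - (Om h3 s t)^2"

definition trOm :: "(real \<Rightarrow> real) \<Rightarrow> (real \<Rightarrow> real) \<Rightarrow> ereal \<Rightarrow> ereal \<Rightarrow> real" where
  "trOm h1 h2 s t = Om h1 s t + Om h2 s t"

definition hamiltonian :: "real \<Rightarrow> ereal \<Rightarrow> (real \<Rightarrow> real) \<Rightarrow> (real \<Rightarrow> real) \<Rightarrow> (real \<Rightarrow> real) \<Rightarrow> bool" where
  "hamiltonian a b h1 h2 h3 \<longleftrightarrow>
     ereal a < b \<and>
     (\<forall>h\<in>{h1, h2, h3}. set_borel_measurable lborel (eivl (ereal a) b) h \<and>
        (\<forall>c::real. ereal c < b \<longrightarrow> set_integrable lborel (eivl (ereal a) (ereal c)) h)) \<and>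
     (AE t in lborel. t \<in> eivl (ereal a) b \<longrightarrow>
        (\<forall>x y::real. 0 \<le> h1 t * x^2 + 2 * h3 t * x * y + h2 t * y^2)) \<and>
     {t \<in> eivl (ereal a) b. h1 t = 0 \<and> h2 t = 0 \<and> h3 t = 0} \<in> null_sets lborel"

definition limit_circle :: "real \<Rightarrow> ereal \<Rightarrow> (real \<Rightarrow> real) \<Rightarrow> (real \<Rightarrow> real) \<Rightarrow> bool" where
  "limit_circle a b h1 h2 \<longleftrightarrow>
     (\<integral>\<^sup>+ t \<in> eivl (ereal a) b. ennreal (h1 t + h2 t) \<partial>lborel) < \<infinity>"

definition definite :: "real \<Rightarrow> ereal \<Rightarrow> (real \<Rightarrow> real) \<Rightarrow> (real \<Rightarrow> real) \<Rightarrow> (real \<Rightarrow> real) \<Rightarrow> bool" where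
  "definite a b h1 h2 h3 \<longleftrightarrow>
     \<not> (\<exists>\<phi>::real. AE t in lborel. t \<in> eivl (ereal a) b \<longrightarrow>
          h1 t = (h1 t + h2 t) * (cos \<phi>)^2 \<and>
          h3 t = (h1 t + h2 t) * cos \<phi> * sin \<phi> \<and>
          h2 t = (h1 t + h2 t) * (sin \<phi>)^2)"

text \<open>Compatible pair (that, shat) for H, r0 with constants c1, c2;
  shat t r stands for the paper's hat s(t;r).\<close>
definition compatible_pair :: "real \<Rightarrow> ereal \<Rightarrow> (real \<Rightarrow> real) \<Rightarrow> (real \<Rightarrow> real) \<Rightarrow> (real \<Rightarrow> real)
    \<Rightarrow> real \<Rightarrow> real \<Rightarrow> real \<Rightarrow> (real \<Rightarrow> real) \<Rightarrow> (real \<Rightarrow> real \<Rightarrow> real) \<Rightarrow> bool" where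
  "compatible_pair a b h1 h2 h3 r0 c1 c2 that shat \<longleftrightarrow>
     (\<forall>r>r0. a < that r \<and> ereal (that r) < b \<and>
        detOm h1 h2 h3 (ereal a) (ereal (that r)) = c1 / r^2) \<and>
     (\<forall>r>r0. \<forall>t. that r \<le> t \<and> ereal t < b \<longrightarrow>
        a \<le> shat t r \<and> shat t r \<le> t \<and>
        detOm h1 h2 h3 (ereal (shat t r)) (ereal t) = c2 / r^2)"

end

theory Submission
  imports Defs
begin

lemma ln_step:
  fixes x y :: real assumes "x > 0" "y > 0"
  shows "ln 2 + (ln y - ln x) / 2 \<le> ln ((x + y) / x)"
proof -
  have "2 * sqrt (x * y) \<le> x + y"
    using arith_geo_mean_sqrt[of x y] assms by simp
  then have "ln (2 * sqrt (x * y)) \<le> ln (x + y)" using assms by simp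
  moreover have "ln (2 * sqrt (x * y)) = ln 2 + (ln x + ln y) / 2"
    using assms by (simp add: ln_mult ln_sqrt)
  moreover have "ln ((x + y) / x) = ln (x + y) - ln x" using assms by (simp add: ln_div)
  ultimately show ?thesis
    by argo
qed

lemma sum_ln_bound:
  fixes A :: "nat \<Rightarrow> real"
  assumes "1 \<le> k" "\<forall>j\<in>{1..k}. A j > 0"
  shows "(real k - 1) * ln 2 + (ln (A k) - ln (A 1)) / 2 \<le> (\<Sum>j\<in>{1..<k}. ln ((A j + A (Suc j)) / A j))"
  using assms
proof (induction k rule: dec_induct)
  case base then show ?case by simp
next
  case (step n)
  have "(real n - 1) * ln 2 + (ln (A n) - ln (A 1)) / 2 \<le> (\<Sum>j\<in>{1..<n}. ln ((A j + A (Suc j)) / A j))"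
    using step by auto
  moreover have "ln 2 + (ln (A (Suc n)) - ln (A n)) / 2 \<le> ln ((A n + A (Suc n)) / A n)"
    using step by (intro ln_step) auto
  moreover have "(\<Sum>j\<in>{1..<Suc n}. ln ((A j + A (Suc j)) / A j)) = (\<Sum>j\<in>{1..<n}. ln ((A j + A (Suc j)) / A j)) + ln ((A n + A (Suc n)) / A n)"
    using step by simp
  moreover have "(real n - 1) * ln 2 = real n * ln 2 - ln 2" by (simp add: algebra_simps)
  ultimately show ?case by (simp only: of_nat_Suc add_diff_cancel_left') argo
qed

lemma final_ineq:
  fixes A :: "nat \<Rightarrow> real" and B tr r c :: real
  assumes "1 \<le> k" "\<forall>j\<in>{1..k}. A j > 0" "B > 0" "A k * B \<ge> c / r^2" "tr \<ge> A 1 + B" "r > 0" "c > 0"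
  shows "real k * ln 2 - (ln r + ln (tr / sqrt c)) \<le> (\<Sum>j\<in>{1..<k}. ln ((A j + A (Suc j)) / A j))"
proof -
  have A1: "A 1 > 0" and Ak: "A k > 0" using assms by auto
  have "B \<ge> c / (r^2 * A k)" using assms Ak by (simp add: field_simps)
  then have "tr \<ge> A 1 + c / (r^2 * A k)" using assms by simp
  then have "r * tr \<ge> r * (A 1 + c / (r^2 * A k))" using assms by (simp add: mult_left_mono)
  moreover have "r * (A 1 + c / (r^2 * A k)) = r * A 1 + c / (r * A k)" using assms Ak
    by (simp add: field_simps power2_eq_square)
  ultimately have "r * tr \<ge> r * A 1 + c / (r * A k)" by simp
  moreover have "r * A 1 + c / (r * A k) \<ge> 2 * sqrt ((r * A 1) * (c / (r * A k)))"
  proof -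
    have g1: "0 \<le> r * A 1" using assms(6) A1 by simp
    have "0 < c / (r * A k)" using assms(6,7) Ak by simp
    then have g2: "0 \<le> c / (r * A k)" by simp
    from arith_geo_mean_sqrt[OF g1 g2] show ?thesis by simp
  qed
  moreover have "(r * A 1) * (c / (r * A k)) = A 1 * c / A k" using assms by simp
  ultimately have key: "2 * sqrt (A 1 * c / A k) \<le> r * tr" by simp
  have trpos: "tr > 0" using assms(3,5) A1 by linarith
  have "ln (2 * sqrt (A 1 * c / A k)) \<le> ln (r * tr)"
  proof -
    have p1: "0 < 2 * sqrt (A 1 * c / A k)" using A1 Ak assms(7) by simp
    have p2: "0 < r * tr" using assms(6) trpos by simp
    show ?thesis using ln_le_cancel_iff[OF p1 p2] key by simp
  qed
  moreover have "ln (2 * sqrt (A 1 * c / A k)) = ln 2 + (ln (A 1) + ln c - ln (A k)) / 2"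
  proof -
    have Y: "0 < A 1 * c / A k" using A1 Ak assms(7) by simp
    have e1: "ln (2 * sqrt (A 1 * c / A k)) = ln 2 + ln (sqrt (A 1 * c / A k))"
      by (rule ln_mult_pos) (use Y in auto)
    have e2: "ln (sqrt (A 1 * c / A k)) = ln (A 1 * c / A k) / 2" using Y by (simp add: ln_sqrt)
    have e3: "ln (A 1 * c / A k) = ln (A 1) + ln c - ln (A k)"
      using ln_divide_pos[of "A 1 * c" "A k"] ln_mult_pos[of "A 1" c] A1 Ak assms(7) by simp
    show ?thesis using e1 e2 e3 by argo
  qed
  moreover have "ln (r * tr) = ln r + ln tr" using assms trpos by (simp add: ln_mult)
  moreover have "ln (tr / sqrt c) = ln tr - ln c / 2" using assms trpos by (simp add: ln_div ln_sqrt)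
  moreover have "(real k - 1) * ln 2 = real k * ln 2 - ln 2" by (simp add: algebra_simps)
  ultimately have "real k * ln 2 - (ln r + ln (tr / sqrt c)) \<le> (real k - 1) * ln 2 + (ln (A k) - ln (A 1)) / 2"
    by argo
  also have "\<dots> \<le> (\<Sum>j\<in>{1..<k}. ln ((A j + A (Suc j)) / A j))"
    by (rule sum_ln_bound) (use assms in auto)
  finally show ?thesis .
qed



lemma eivl_einterval: "eivl = einterval"
  by (auto simp: eivl_def einterval_def fun_eq_iff)

lemma eivl_real[simp]: "eivl (ereal x) (ereal y) = {x<..<y}"
  by (auto simp: eivl_def)

lemma eivl_sets_borel[measurable, simp]: "eivl x y \<in> sets borel"
  by (simp add: eivl_einterval)

lemma eivl_sets[measurable, simp]: "eivl x y \<in> sets lborel"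
  by (simp add: eivl_einterval)

lemma eivl_empty: "y \<le> x \<Longrightarrow> eivl x y = {}"
  by (auto simp: eivl_def)


lemma Om_empty: "y \<le> x \<Longrightarrow> Om h x y = 0"
  by (simp add: Om_def eivl_empty set_lebesgue_integral_def)

lemma quad_psd:
  fixes p q r :: real
  assumes "\<And>x y. 0 \<le> x^2 * p + 2 * x * y * q + y^2 * r"
  shows "0 \<le> p" "0 \<le> r" "q^2 \<le> p * r"
proof -
  show p: "0 \<le> p" using assms[of 1 0] by simp
  show r: "0 \<le> r" using assms[of 0 1] by simp
  show "q^2 \<le> p * r"
  proof (cases "p = 0")
    case True
    show ?thesis
    proof (rule ccontr)
      assume "\<not> ?thesis"
      then have "q \<noteq> 0" using True by simp
      have "0 \<le> (-(r+1)/(2*q))^2 * p + 2 * (-(r+1)/(2*q)) * 1 * q + 1^2 * r" by (rule assms)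
      also have "\<dots> = -1" using True \<open>q \<noteq> 0\<close> by (simp add: field_simps)
      finally show False by simp
    qed
  next
    case False
    then have pp: "p > 0" using p by simp
    have "0 \<le> (-q)^2 * p + 2 * (-q) * p * q + p^2 * r" by (rule assms)
    also have "\<dots> = p * (p * r - q^2)" by (simp add: algebra_simps power2_eq_square)
    finally have "0 \<le> p * r - q^2" using pp by (simp add: zero_le_mult_iff)
    then show ?thesis by simp
  qed
qed

lemma det_mono_alg:
  fixes p1 p2 p3 q1 q2 q3 :: real
  assumes "0 \<le> p1" "0 \<le> p2" "p3^2 \<le> p1 * p2" "0 \<le> q1" "0 \<le> q2" "q3^2 \<le> q1 * q2"
  shows "p1 * p2 - p3^2 \<le> (p1 + q1) * (p2 + q2) - (p3 + q3)^2"
proof -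
  have "(2 * p3 * q3)^2 \<le> 4 * (p1 * p2) * (q1 * q2)"
    using mult_mono[OF assms(6) assms(3)] assms(4,5) by (simp add: power_mult_distrib mult_ac)
  also have "\<dots> \<le> (p1 * q2 + p2 * q1)^2"
    using sum_squares_ge_zero[of "p1*q2 - p2*q1" 0] by (simp add: power2_eq_square algebra_simps)
  finally have "\<bar>2 * p3 * q3\<bar> \<le> \<bar>p1 * q2 + p2 * q1\<bar>" by (simp add: abs_le_square_iff)
  then have "2 * p3 * q3 \<le> p1 * q2 + p2 * q1" using assms by simp
  then show ?thesis using assms(6) by (simp add: power2_eq_square algebra_simps)
qed

lemma det_strict_alg:
  fixes p1 p2 p3 q1 q2 q3 :: real
  assumes "0 \<le> p1" "0 \<le> p2" "p3^2 < p1 * p2" "0 \<le> q1" "0 \<le> q2" "q3^2 \<le> q1 * q2"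
    and "(p1 + q1) * (p2 + q2) - (p3 + q3)^2 \<le> p1 * p2 - p3^2"
  shows "q1 = 0 \<and> q2 = 0"
proof (rule ccontr)
  assume nz: "\<not> (q1 = 0 \<and> q2 = 0)"
  have p1: "p1 > 0" and p2: "p2 > 0" using assms(1,2,3)
    by (metis less_eq_real_def mult_zero_left mult_zero_right not_less power2_less_0 zero_less_power2 zero_le_power2)+
  have "2 * p3 * q3 < p1 * q2 + p2 * q1"
  proof (cases "q1 * q2 = 0")
    case True
    then have "q3^2 \<le> 0" using assms(6) by linarith
    then have "q3 = 0" by simp
    moreover have "p1 * q2 + p2 * q1 > 0"
      using nz p1 p2 assms(4,5) by (metis add_pos_nonneg add_nonneg_pos less_eq_real_def mult_pos_pos mult_nonneg_nonneg)
    ultimately show ?thesis by simp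
  next
    case False
    then have qq: "q1 * q2 > 0" using assms(4,5) by (simp add: less_eq_real_def)
    have "(2 * p3 * q3)^2 \<le> 4 * p3^2 * (q1 * q2)"
      using assms(6) by (simp add: power_mult_distrib mult_left_mono)
    also have "\<dots> < 4 * (p1 * p2) * (q1 * q2)" using mult_strict_right_mono[OF assms(3) qq] by simp
    also have "\<dots> \<le> (p1 * q2 + p2 * q1)^2"
      using sum_squares_ge_zero[of "p1*q2 - p2*q1" 0] by (simp add: power2_eq_square algebra_simps)
    finally have "\<bar>2 * p3 * q3\<bar> < \<bar>p1 * q2 + p2 * q1\<bar>" by (metis abs_le_square_iff not_le)
    then show ?thesis using assms p1 p2 by simp
  qed
  then show False using assms(6,7) by (simp add: power2_eq_square algebra_simps)
qed


lemma quad_form_nonneg: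
  fixes p q r x y :: real
  assumes "0 \<le> p" "0 \<le> r" "q^2 \<le> p * r"
  shows "0 \<le> x^2 * p + 2 * x * y * q + y^2 * r"
proof (cases "p = 0")
  case True
  then have "q^2 \<le> 0" using assms by simp
  then have "q = 0" by simp
  then show ?thesis using True assms by simp
next
  case False
  then have pp: "p > 0" using assms by simp
  have "p * (x^2 * p + 2 * x * y * q + y^2 * r) = (x * p + y * q)^2 + y^2 * (p * r - q^2)"
    by (simp add: power2_eq_square algebra_simps)
  also have "\<dots> \<ge> 0" using assms by simp
  finally show ?thesis using pp by (simp add: zero_le_mult_iff)
qed

locale ham =
  fixes a :: real and b :: ereal and h1 h2 h3 :: "real \<Rightarrow> real"
  assumes ab: "ereal a < b"
    and int1: "set_integrable lborel (eivl a b) h1"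
    and int2: "set_integrable lborel (eivl a b) h2"
    and int3: "set_integrable lborel (eivl a b) h3"
    and psd: "AE t in lborel. t \<in> eivl a b \<longrightarrow> 0 \<le> h1 t \<and> 0 \<le> h2 t \<and> (h3 t)^2 \<le> h1 t * h2 t"
    and nz: "{t \<in> eivl a b. h1 t = 0 \<and> h2 t = 0 \<and> h3 t = 0} \<in> null_sets lborel"
begin

lemma eivl_sub: "ereal a \<le> x \<Longrightarrow> y \<le> b \<Longrightarrow> eivl x y \<subseteq> eivl a b"
  unfolding eivl_def using le_less_trans less_le_trans by blast

lemma int_sub:
  assumes "ereal a \<le> x" "y \<le> b" "h \<in> {h1, h2, h3}"
  shows "set_integrable lborel (eivl x y) h"
  using assms int1 int2 int3 eivl_sub[OF assms(1,2)]
  by (auto intro!: set_integrable_subset[where A="eivl a b"])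

lemma Om_interval: "x \<le> y \<Longrightarrow> Om h x y = (LBINT u=x..y. h u)"
  by (simp add: Om_def interval_lebesgue_integral_le_eq eivl_einterval)

lemma Om_add:
  assumes "ereal a \<le> x" "x \<le> y" "y \<le> z" "z \<le> b" "h \<in> {h1, h2, h3}"
  shows "Om h x z = Om h x y + Om h y z"
proof -
  have xz: "x \<le> z" using assms by (meson order_trans)
  have "interval_lebesgue_integrable lborel (min x (min y z)) (max x (max y z)) h"
    using assms xz int_sub[OF assms(1) assms(4) assms(5)]
    by (simp add: interval_lebesgue_integrable_def eivl_einterval min_def max_def)
  from interval_integral_sum[OF this] show ?thesis
    using assms by (simp add: Om_interval order_trans[of x y z])
qed

lemma AE_nonneg:
  "AE t in lborel. t \<in> eivl a b \<longrightarrow> 0 \<le> h1 t \<and> 0 \<le> h2 t"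
  using psd by eventually_elim auto

lemma Om_nonneg:
  assumes "ereal a \<le> x" "y \<le> b" "h \<in> {h1, h2}"
  shows "0 \<le> Om h x y"
  unfolding Om_def set_lebesgue_integral_def
proof (rule integral_nonneg_AE)
  show "AE t in lborel. 0 \<le> indicat_real (eivl x y) t *\<^sub>R h t"
    using AE_nonneg
  proof eventually_elim
    case (elim t)
    then show ?case using assms eivl_sub[OF assms(1,2)]
      by (auto simp: indicator_def)
  qed
qed

lemma Om_mono:
  assumes "ereal a \<le> x" "x \<le> x'" "x' \<le> y'" "y' \<le> y" "y \<le> b" "h \<in> {h1, h2}"
  shows "Om h x' y' \<le> Om h x y"
proof -
  have h: "h \<in> {h1, h2, h3}" using assms by auto
  have "Om h x y = Om h x x' + Om h x' y" using Om_add[OF assms(1) assms(2) _ assms(5) h] assms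
    by (meson order_trans)
  also have "Om h x' y = Om h x' y' + Om h y' y"
    using Om_add[of x' y' y h] assms h by (meson order_trans)
  finally have "Om h x y = Om h x x' + Om h x' y' + Om h y' y" by simp
  moreover have "0 \<le> Om h x x'" "0 \<le> Om h y' y"
    using Om_nonneg assms by (meson order_trans)+
  ultimately show ?thesis by simp
qed

lemma Om_psd:
  assumes "ereal a \<le> x" "y \<le> b"
  shows "0 \<le> Om h1 x y" "0 \<le> Om h2 x y" "(Om h3 x y)^2 \<le> Om h1 x y * Om h2 x y"
proof -
  show "0 \<le> Om h1 x y" "0 \<le> Om h2 x y" using Om_nonneg assms by auto
  let ?S = "eivl x y"
  have i1: "integrable lborel (\<lambda>t. indicator ?S t * h1 t)"
    using int_sub[OF assms, of h1] by (simp add: set_integrable_def)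
  have i2: "integrable lborel (\<lambda>t. indicator ?S t * h2 t)"
    using int_sub[OF assms, of h2] by (simp add: set_integrable_def)
  have i3: "integrable lborel (\<lambda>t. indicator ?S t * h3 t)"
    using int_sub[OF assms, of h3] by (simp add: set_integrable_def)
  have "0 \<le> \<alpha>^2 * Om h1 x y + 2 * \<alpha> * \<beta> * Om h3 x y + \<beta>^2 * Om h2 x y" for \<alpha> \<beta> :: real
  proof -
    have "\<alpha>^2 * Om h1 x y + 2 * \<alpha> * \<beta> * Om h3 x y + \<beta>^2 * Om h2 x y =
      integral\<^sup>L lborel (\<lambda>t. \<alpha>^2 * (indicator ?S t * h1 t) + 2 * \<alpha> * \<beta> * (indicator ?S t * h3 t)
         + \<beta>^2 * (indicator ?S t * h2 t))"
      using i1 i2 i3 by (simp add: Om_def set_lebesgue_integral_def)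
    also have "\<dots> \<ge> 0"
    proof (rule integral_nonneg_AE)
      show "AE t in lborel. 0 \<le> \<alpha>^2 * (indicator ?S t * h1 t) + 2 * \<alpha> * \<beta> * (indicator ?S t * h3 t)
         + \<beta>^2 * (indicator ?S t * h2 t)"
        using psd
      proof eventually_elim
        case (elim t)
        show ?case
        proof (cases "t \<in> ?S")
          case True
          then have "t \<in> eivl a b" using eivl_sub[OF assms] by auto
          then show ?thesis using elim True quad_form_nonneg[of "h1 t" "h2 t" "h3 t" \<alpha> \<beta>] by simp
        qed simp
      qed
    qed
    finally show ?thesis .
  qed
  then show "(Om h3 x y)^2 \<le> Om h1 x y * Om h2 x y"
    using quad_psd(3)[of "Om h1 x y" "Om h3 x y" "Om h2 x y"] by blast
qed

lemma detOm_split: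
  assumes "ereal a \<le> x" "x \<le> y" "y \<le> z" "z \<le> b"
  shows "detOm h1 h2 h3 x z = (Om h1 x y + Om h1 y z) * (Om h2 x y + Om h2 y z) - (Om h3 x y + Om h3 y z)^2"
  using Om_add[OF assms, of h1] Om_add[OF assms, of h2] Om_add[OF assms, of h3]
  by (simp add: detOm_def)

lemma det_mono_left:
  assumes "ereal a \<le> x" "x \<le> y" "y \<le> z" "z \<le> b"
  shows "detOm h1 h2 h3 y z \<le> detOm h1 h2 h3 x z"
proof -
  have y: "ereal a \<le> y" "y \<le> b" using assms by (meson order_trans)+
  note P = Om_psd[OF y(1) assms(4)]
  note Q = Om_psd[OF assms(1) y(2)]
  have e: "Om h1 x z = Om h1 x y + Om h1 y z" "Om h2 x z = Om h2 x y + Om h2 y z"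
    "Om h3 x z = Om h3 x y + Om h3 y z" using Om_add[OF assms] by auto
  from det_mono_alg[OF P Q] show ?thesis
    unfolding detOm_def e by (simp add: ac_simps)
qed

lemma det_mono_right:
  assumes "ereal a \<le> x" "x \<le> y" "y \<le> z" "z \<le> b"
  shows "detOm h1 h2 h3 x y \<le> detOm h1 h2 h3 x z"
proof -
  have y: "ereal a \<le> y" "y \<le> b" using assms by (meson order_trans)+
  note P = Om_psd[OF assms(1) y(2)]
  note Q = Om_psd[OF y(1) assms(4)]
  have e: "Om h1 x z = Om h1 x y + Om h1 y z" "Om h2 x z = Om h2 x y + Om h2 y z"
    "Om h3 x z = Om h3 x y + Om h3 y z" using Om_add[OF assms] by auto
  from det_mono_alg[OF P Q] show ?thesis
    unfolding detOm_def e by (simp add: ac_simps)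
qed

lemma zero_null:
  assumes "ereal a \<le> x" "x < y" "y \<le> b" "Om h1 x y = 0" "Om h2 x y = 0"
  shows False
proof -
  let ?S = "eivl x y"
  have sub: "?S \<subseteq> eivl a b" using eivl_sub assms by simp
  have z: "AE t in lborel. t \<in> ?S \<longrightarrow> h t = 0" if h: "h \<in> {h1, h2}" "Om h x y = 0" for h
  proof -
    have i: "integrable lborel (\<lambda>t. indicator ?S t * h t)"
      using int_sub[OF assms(1) assms(3), of h] h by (auto simp: set_integrable_def)
    have nn: "AE t in lborel. 0 \<le> indicator ?S t * h t"
      using AE_nonneg
    proof eventually_elim
      case (elim t) then show ?case using h sub by (auto simp: indicator_def)
    qed
    have "integral\<^sup>L lborel (\<lambda>t. indicator ?S t * h t) = 0"
      using h by (simp add: Om_def set_lebesgue_integral_def)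
    then have "AE t in lborel. indicator ?S t * h t = 0"
      using integral_nonneg_eq_0_iff_AE[OF i nn] by simp
    then show ?thesis by eventually_elim (auto simp: indicator_def)
  qed
  have z1: "AE t in lborel. t \<in> ?S \<longrightarrow> h1 t = 0" using z assms(4) by simp
  have z2: "AE t in lborel. t \<in> ?S \<longrightarrow> h2 t = 0" using z assms(5) by simp
  have "AE t in lborel. t \<notin> ?S" using z1 z2 psd AE_not_in[OF nz]
  proof eventually_elim
    case (elim t)
    show ?case
    proof
      assume tS: "t \<in> ?S"
      then have tab: "t \<in> eivl a b" using sub by auto
      have "h1 t = 0" "h2 t = 0" using elim tS by auto
      moreover have "(h3 t)^2 \<le> 0" using elim tab calculation by simp
      then have "h3 t = 0" by simp
      ultimately show False using elim tab by auto
    qed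
  qed
  then have Snull: "?S \<in> null_sets lborel" by (subst AE_iff_null_sets) auto
  obtain p where p: "p \<in> einterval x y" using einterval_nonempty[OF assms(2)] by blast
  then have "ereal p < y" by (simp add: einterval_iff)
  then obtain q where q: "q \<in> einterval p y" using einterval_nonempty by blast
  have sub2: "{p<..<q} \<subseteq> ?S" using p q
    by (auto simp: einterval_iff eivl_def intro: less_trans[of x "ereal p"] less_trans[of _ "ereal q" y])
  have "{p<..<q} \<in> null_sets lborel" by (rule null_sets_subset[OF Snull _ sub2]) simp
  moreover have "p < q" using q by (simp add: einterval_iff)
  ultimately show False by (simp add: null_sets_def)
qed

lemma det_strict_left:
  assumes "ereal a \<le> x" "x < y" "y \<le> z" "z \<le> b" "detOm h1 h2 h3 y z > 0"
  shows "detOm h1 h2 h3 y z < detOm h1 h2 h3 x z"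
proof (rule ccontr)
  assume nl: "\<not> ?thesis"
  have y: "ereal a \<le> y" "y \<le> b" using assms by (meson order_trans less_imp_le)+
  note P = Om_psd[OF y(1) assms(4)]
  note Q = Om_psd[OF assms(1) y(2)]
  have "Om h1 x y = 0 \<and> Om h2 x y = 0"
  proof (rule det_strict_alg[OF P(1,2) _ Q])
    have e: "Om h1 x z = Om h1 x y + Om h1 y z" "Om h2 x z = Om h2 x y + Om h2 y z"
      "Om h3 x z = Om h3 x y + Om h3 y z" using Om_add[OF assms(1) less_imp_le[OF assms(2)] assms(3,4)] by auto
    show "(Om h3 y z)\<^sup>2 < Om h1 y z * Om h2 y z" using assms(5) by (simp add: detOm_def)
    show "(Om h1 y z + Om h1 x y) * (Om h2 y z + Om h2 x y) - (Om h3 y z + Om h3 x y)\<^sup>2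
      \<le> Om h1 y z * Om h2 y z - (Om h3 y z)\<^sup>2" using nl unfolding detOm_def e by (simp add: ac_simps)
  qed
  then show False using zero_null[OF assms(1,2) y(2)] by simp
qed

lemma det_strict_right:
  assumes "ereal a \<le> x" "x \<le> y" "y < z" "z \<le> b" "detOm h1 h2 h3 x y > 0"
  shows "detOm h1 h2 h3 x y < detOm h1 h2 h3 x z"
proof (rule ccontr)
  assume nl: "\<not> ?thesis"
  have y: "ereal a \<le> y" "y \<le> b" using assms by (meson order_trans less_imp_le)+
  note P = Om_psd[OF assms(1) y(2)]
  note Q = Om_psd[OF y(1) assms(4)]
  have "Om h1 y z = 0 \<and> Om h2 y z = 0"
  proof (rule det_strict_alg[OF P(1,2) _ Q])
    have e: "Om h1 x z = Om h1 x y + Om h1 y z" "Om h2 x z = Om h2 x y + Om h2 y z"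
      "Om h3 x z = Om h3 x y + Om h3 y z" using Om_add[OF assms(1,2) less_imp_le[OF assms(3)] assms(4)] by auto
    show "(Om h3 x y)\<^sup>2 < Om h1 x y * Om h2 x y" using assms(5) by (simp add: detOm_def)
    show "(Om h1 x y + Om h1 y z) * (Om h2 x y + Om h2 y z) - (Om h3 x y + Om h3 y z)\<^sup>2
      \<le> Om h1 x y * Om h2 x y - (Om h3 x y)\<^sup>2" using nl unfolding detOm_def e by (simp add: ac_simps)
  qed
  then show False using zero_null[OF y(1) assms(3,4)] by simp
qed

lemma Om1_pos:
  assumes "ereal a \<le> x" "y \<le> b" "detOm h1 h2 h3 x y > 0"
  shows "Om h1 x y > 0" "Om h2 x y > 0"
proof -
  note P = Om_psd[OF assms(1,2)]
  have "Om h1 x y * Om h2 x y > 0" using assms(3) zero_le_power2[of "Om h3 x y"] unfolding detOm_def by linarith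
  then show "Om h1 x y > 0" "Om h2 x y > 0" using P(1,2)
    by (metis less_eq_real_def mult_zero_left mult_zero_right not_less)+
qed

lemma F_cont:
  assumes "ereal a \<le> ereal \<sigma>" "\<sigma> \<le> y" "ereal y < b"
  shows "continuous_on {\<sigma>..y} (\<lambda>t. Om h1 (ereal \<sigma>) (ereal t))"
proof -
  have si: "set_integrable lborel {\<sigma><..<t} h1" if "t \<le> y" for t
  proof -
    have "ereal t < b" using that assms(3) by (metis ereal_less_eq(3) le_less_trans)
    then show ?thesis using int_sub[OF assms(1), of "ereal t" h1] by simp
  qed
  have "h1 integrable_on {\<sigma><..<y}" using set_borel_integral_eq_integral(1)[OF si] by simp
  then have "h1 integrable_on {\<sigma>..y}" by (simp add: integrable_on_open_interval_real)
  then have c: "continuous_on {\<sigma>..y} (\<lambda>t. integral {\<sigma>..t} h1)"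
    by (rule indefinite_integral_continuous_1)
  have "Om h1 (ereal \<sigma>) (ereal t) = integral {\<sigma>..t} h1" if "t \<in> {\<sigma>..y}" for t
  proof -
    have "Om h1 (ereal \<sigma>) (ereal t) = (LINT u:{\<sigma><..<t}|lborel. h1 u)" by (simp add: Om_def)
    also have "\<dots> = integral {\<sigma><..<t} h1"
      using set_borel_integral_eq_integral(2)[OF si] that by simp
    also have "\<dots> = integral {\<sigma>..t} h1" by (simp add: integral_open_interval_real)
    finally show ?thesis .
  qed
  then show ?thesis using c by (metis (no_types, lifting) continuous_on_cong)
qed


end

context ham begin

lemma F_mono:
  assumes "ereal a \<le> ereal \<sigma>" "\<sigma> \<le> t" "ereal t \<le> y" "y \<le> b"
  shows "Om h1 (ereal \<sigma>) (ereal t) \<le> Om h1 (ereal \<sigma>) y"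
  by (rule Om_mono[OF assms(1)]) (use assms in auto)

lemma F_meas:
  assumes "ereal a \<le> ereal \<sigma>" "ereal \<sigma> \<le> x" "y \<le> b"
  shows "(\<lambda>t. ennreal (h1 t / Om h1 (ereal \<sigma>) (ereal t)) * indicator (eivl x y) t) \<in> borel_measurable lborel"
proof -
  let ?S = "eivl x y"
  let ?F = "\<lambda>t. Om h1 (ereal \<sigma>) (ereal t)"
  have "continuous_on ?S ?F"
  proof (rule continuous_at_imp_continuous_on, rule ballI)
    fix t assume t: "t \<in> ?S"
    then have "x < ereal t" by (simp add: eivl_def)
    then have "ereal \<sigma> < ereal t" using assms(2) by (rule le_less_trans[rotated])
    then have st: "\<sigma> < t" by simp
    have "ereal t < b" using t assms(3) by (auto simp: eivl_def)
    then obtain y' where y': "y' \<in> einterval (ereal t) b" using einterval_nonempty by blast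
    then have y'': "t < y'" "ereal y' < b" by (auto simp: einterval_iff)
    have "continuous_on {\<sigma>..y'} ?F" using F_cont[OF assms(1) _ y''(2)] st y'' by simp
    moreover have "t \<in> interior {\<sigma>..y'}" using st y'' by simp
    ultimately show "isCont ?F t" by (rule continuous_on_interior)
  qed
  then have g: "(\<lambda>t. indicator ?S t *\<^sub>R ?F t) \<in> borel_measurable borel"
    by (intro borel_measurable_continuous_on_indicator) simp_all
  have ai: "ereal a \<le> x" using assms by (meson order_trans)
  have f: "(\<lambda>t. indicator ?S t *\<^sub>R h1 t) \<in> borel_measurable borel"
    using int_sub[OF ai assms(3), of h1] unfolding set_integrable_def
    by (simp add: borel_measurable_integrable)
  have eq: "(\<lambda>t. ennreal (h1 t / ?F t) * indicator ?S t) =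
      (\<lambda>t. ennreal ((indicator ?S t *\<^sub>R h1 t) / (indicator ?S t *\<^sub>R ?F t)))"
    by (auto simp: indicator_def fun_eq_iff)
  show ?thesis unfolding eq using f g by measurable
qed

lemma piece:
  assumes "ereal a \<le> ereal \<sigma>" "\<sigma> \<le> x" "ereal x < y" "y \<le> b" "0 < Om h1 (ereal \<sigma>) (ereal x)"
  shows "ennreal ((Om h1 (ereal \<sigma>) y - Om h1 (ereal \<sigma>) (ereal x)) / Om h1 (ereal \<sigma>) y)
     \<le> (\<integral>\<^sup>+t. ennreal (h1 t / Om h1 (ereal \<sigma>) (ereal t)) * indicator (eivl (ereal x) y) t \<partial>lborel)"
proof -
  let ?S = "eivl (ereal x) y"
  let ?F = "\<lambda>t. Om h1 (ereal \<sigma>) (ereal t)"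
  let ?M = "Om h1 (ereal \<sigma>) y"
  have Mge: "?F x \<le> ?M" using F_mono[OF assms(1,2) _ assms(4)] assms(3) by simp
  then have Mpos: "?M > 0" using assms(5) by simp
  have ai: "ereal a \<le> ereal x" using assms(1,2) by (simp)
  have sub: "?S \<subseteq> eivl a b" using eivl_sub[OF ai assms(4)] .
  have eq: "Om h1 (ereal x) y = ?M - ?F x"
    using Om_add[OF assms(1) _ less_imp_le[OF assms(3)] assms(4), of h1] assms(2) by simp
  have i: "integrable lborel (\<lambda>t. indicator ?S t * h1 t)"
    using int_sub[OF ai assms(4), of h1] by (simp add: set_integrable_def)
  have i2: "integrable lborel (\<lambda>t. indicator ?S t * h1 t / ?M)"
    using i by simp
  have nn: "AE t in lborel. 0 \<le> indicator ?S t * h1 t / ?M"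
    using AE_nonneg
  proof eventually_elim
    case (elim t) then show ?case using sub Mpos by (auto simp: indicator_def)
  qed
  have "ennreal ((?M - ?F x) / ?M) = ennreal (integral\<^sup>L lborel (\<lambda>t. indicator ?S t * h1 t / ?M))"
    using eq by (simp add: Om_def set_lebesgue_integral_def)
  also have "\<dots> = (\<integral>\<^sup>+t. ennreal (indicator ?S t * h1 t / ?M) \<partial>lborel)"
    using nn_integral_eq_integral[OF i2 nn] by simp
  also have "\<dots> \<le> (\<integral>\<^sup>+t. ennreal (h1 t / ?F t) * indicator ?S t \<partial>lborel)"
  proof (rule nn_integral_mono_AE)
    show "AE t in lborel. ennreal (indicator ?S t * h1 t / ?M) \<le> ennreal (h1 t / ?F t) * indicator ?S t"
      using AE_nonneg
    proof eventually_elim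
      case (elim t)
      show ?case
      proof (cases "t \<in> ?S")
        case True
        then have tx: "x < t" "ereal t < y" by (auto simp: eivl_def)
        have h0: "0 \<le> h1 t" using elim True sub by auto
        have "?F x \<le> ?F t" using F_mono[OF assms(1,2), of "ereal t"] tx assms(4) by simp
        then have Fp: "?F t > 0" using assms(5) by simp
        have "?F t \<le> ?M" using F_mono[OF assms(1), of t y] tx assms(2,4) by simp
        then have "h1 t / ?M \<le> h1 t / ?F t" using Fp h0 by (intro divide_left_mono) simp_all
        then show ?thesis using True by (simp add: ennreal_leI)
      qed simp
    qed
  qed
  finally show ?thesis .
qed

lemma approx_point:
  assumes "ereal a \<le> ereal \<sigma>" "\<sigma> \<le> u" "ereal u < v" "v \<le> b" "w < Om h1 (ereal \<sigma>) v"
  shows "\<exists>y. u \<le> y \<and> ereal y < v \<and> w < Om h1 (ereal \<sigma>) (ereal y)"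
proof -
  obtain U l :: "nat \<Rightarrow> real" where ap:
    "einterval u v = (\<Union>i. {l i .. U i})"
    "incseq U" "decseq l" "\<And>i. l i < U i" "\<And>i. ereal u < ereal (l i)" "\<And>i. ereal (U i) < v"
    "(\<lambda>i. ereal (l i)) \<longlonglongrightarrow> ereal u" "(\<lambda>i. ereal (U i)) \<longlonglongrightarrow> v"
    by (rule einterval_Icc_approximation[OF assms(3)]) blast
  have ai: "ereal a \<le> ereal u" using assms(1,2) by simp
  have si: "set_integrable lborel (einterval u v) h1"
    using int_sub[OF ai assms(4), of h1] by (simp add: eivl_einterval)
  have lim: "(\<lambda>i. LBINT x=l i..U i. h1 x) \<longlonglongrightarrow> (LBINT x=u..v. h1 x)"
    by (rule interval_integral_Icc_approx_integrable[OF assms(3) ap si])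
  have tot: "Om h1 (ereal \<sigma>) v = Om h1 (ereal \<sigma>) (ereal u) + Om h1 (ereal u) v"
    using Om_add[OF assms(1) _ less_imp_le[OF assms(3)] assms(4), of h1] assms(2) by simp
  have "Om h1 (ereal u) v = (LBINT x=u..v. h1 x)" using assms(3) by (simp add: Om_interval)
  then have "w - Om h1 (ereal \<sigma>) (ereal u) < (LBINT x=u..v. h1 x)" using tot assms(5) by simp
  then obtain i where i: "w - Om h1 (ereal \<sigma>) (ereal u) < (LBINT x=l i..U i. h1 x)"
  proof -
    have "eventually (\<lambda>i. w - Om h1 (ereal \<sigma>) (ereal u) < (LBINT x=l i..U i. h1 x)) sequentially"
      using order_tendstoD(1)[OF lim] \<open>w - Om h1 (ereal \<sigma>) (ereal u) < (LBINT x=u..v. h1 x)\<close> by blast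
    then obtain N where "\<forall>n\<ge>N. w - Om h1 (ereal \<sigma>) (ereal u) < (LBINT x=l n..U n. h1 x)"
      unfolding eventually_sequentially by blast
    then show ?thesis using that by blast
  qed
  have lu: "u < l i" "l i < U i" "ereal (U i) < v" using ap by auto
  have "Om h1 (ereal \<sigma>) (ereal (U i)) = Om h1 (ereal \<sigma>) (ereal u) + Om h1 (ereal u) (ereal (U i))"
    using Om_add[OF assms(1), of "ereal u" "ereal (U i)" h1] assms(2,4) lu by (simp add: less_imp_le order_trans)
  also have "Om h1 (ereal u) (ereal (U i)) = Om h1 (ereal u) (ereal (l i)) + Om h1 (ereal (l i)) (ereal (U i))"
    using Om_add[OF ai, of "ereal (l i)" "ereal (U i)" h1] lu assms(4) by (simp add: less_imp_le)
  also have "Om h1 (ereal (l i)) (ereal (U i)) = (LBINT x=l i..U i. h1 x)"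
    using lu by (simp add: Om_interval)
  finally have "Om h1 (ereal \<sigma>) (ereal (U i)) = Om h1 (ereal \<sigma>) (ereal u) + Om h1 (ereal u) (ereal (l i)) + (LBINT x=l i..U i. h1 x)"
    by simp
  moreover have "0 \<le> Om h1 (ereal u) (ereal (l i))"
  proof (rule Om_nonneg[OF ai])
    have "ereal (l i) < ereal (U i)" using lu by simp
    also have "\<dots> < v" using lu by simp
    finally show "ereal (l i) \<le> b" using assms(4) by simp
  qed simp
  ultimately have "w < Om h1 (ereal \<sigma>) (ereal (U i))" using i by simp
  then show ?thesis using lu by (intro exI[of _ "U i"]) simp
qed

lemma chain_le:
  fixes p :: "nat \<Rightarrow> ereal"
  assumes "\<forall>i<n. p i \<le> p (Suc i)"
  shows "p 0 \<le> p n"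
  using assms
proof (induction n)
  case (Suc n) then show ?case by (metis less_Suc_eq order_trans)
qed simp

lemma sum_ind_le:
  fixes p :: "nat \<Rightarrow> ereal"
  assumes "\<forall>i<n. p i \<le> p (Suc i)"
  shows "(\<Sum>i<n. indicator (eivl (p i) (p (Suc i))) t :: ennreal) \<le> indicator (eivl (p 0) (p n)) t"
  using assms
proof (induction n)
  case 0 then show ?case by simp
next
  case (Suc n)
  have IH: "(\<Sum>i<n. indicator (eivl (p i) (p (Suc i))) t :: ennreal) \<le> indicator (eivl (p 0) (p n)) t"
    using Suc by simp
  have c: "p 0 \<le> p n" using chain_le[of n p] Suc.prems by simp
  have s: "p n \<le> p (Suc n)" using Suc.prems by simp
  have "(\<Sum>i<Suc n. indicator (eivl (p i) (p (Suc i))) t :: ennreal)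
      = (\<Sum>i<n. indicator (eivl (p i) (p (Suc i))) t) + indicator (eivl (p n) (p (Suc n))) t" by simp
  also have "\<dots> \<le> indicator (eivl (p 0) (p n)) t + indicator (eivl (p n) (p (Suc n))) t"
    using IH by (rule add_right_mono)
  also have "\<dots> \<le> indicator (eivl (p 0) (p (Suc n))) t"
  proof -
    have "\<not> (t \<in> eivl (p 0) (p n) \<and> t \<in> eivl (p n) (p (Suc n)))"
      by (auto simp: eivl_def)
    moreover have "t \<in> eivl (p 0) (p n) \<Longrightarrow> t \<in> eivl (p 0) (p (Suc n))"
      using s by (auto simp: eivl_def intro: less_le_trans)
    moreover have "t \<in> eivl (p n) (p (Suc n)) \<Longrightarrow> t \<in> eivl (p 0) (p (Suc n))"
      using c by (auto simp: eivl_def intro: le_less_trans)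
    ultimately show ?thesis by (auto simp: indicator_def)
  qed
  finally show ?case .
qed

lemma powr_ineq:
  fixes R :: real and n :: nat
  assumes "R > 1" "n \<ge> 1"
  shows "ln R * R powr (-1 / real n) \<le> real n * (1 - R powr (-1 / real n))"
proof -
  define q where "q = R powr (1 / real n)"
  have qp: "q > 0" using assms by (simp add: q_def)
  have inv: "R powr (-1 / real n) = 1 / q"
    using assms by (simp add: q_def powr_minus_divide)
  have lq: "ln q = ln R / real n" using assms by (simp add: q_def ln_powr)
  have "ln q \<le> q - 1" using qp by (rule ln_le_minus_one)
  then have "ln R \<le> real n * (q - 1)" using lq assms by (simp add: field_simps)
  then have "ln R / q \<le> real n * (q - 1) / q" using qp by (simp add: divide_right_mono)
  also have "real n * (q - 1) / q = real n * (1 - 1 / q)" using qp by (simp add: field_simps)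
  finally show ?thesis using inv by simp
qed

lemma log_bound:
  assumes "ereal a \<le> ereal \<sigma>" "\<sigma> \<le> u" "ereal u < v" "v \<le> b" "0 < Om h1 (ereal \<sigma>) (ereal u)"
  shows "ennreal (ln (Om h1 (ereal \<sigma>) v / Om h1 (ereal \<sigma>) (ereal u)))
     \<le> (\<integral>\<^sup>+t. ennreal (h1 t / Om h1 (ereal \<sigma>) (ereal t)) * indicator (eivl (ereal u) v) t \<partial>lborel)"
    (is "_ \<le> ?I")
proof -
  define F where "F t = Om h1 (ereal \<sigma>) (ereal t)" for t
  define Fu where "Fu = F u"
  define Fv where "Fv = Om h1 (ereal \<sigma>) v"
  define f where "f t = ennreal (h1 t / F t)" for t
  have I_eq: "?I = (\<integral>\<^sup>+t. f t * indicator (eivl (ereal u) v) t \<partial>lborel)"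
    by (simp add: f_def F_def)
  have Fup: "Fu > 0" using assms(5) by (simp add: Fu_def F_def)
  have FuFv: "Fu \<le> Fv" using F_mono[OF assms(1,2) less_imp_le[OF assms(3)] assms(4)]
    by (simp add: Fu_def Fv_def F_def)
  show ?thesis
  proof (cases "Fu = Fv")
    case True
    then show ?thesis using Fup by (simp add: Fu_def Fv_def F_def)
  next
    case False
    then have FuFv': "Fu < Fv" using FuFv by simp
    define R where "R = Fv / Fu"
    have R1: "R > 1" using FuFv' Fup by (simp add: R_def)
    have main: "ennreal (ln R * R powr (-1 / real n)) \<le> ?I" if n1: "n \<ge> 1" for n :: nat
    proof -
      define W where "W i = Fu * R powr (real i / real n)" for i :: nat
      have W0: "W 0 = Fu" using R1 by (simp add: W_def)
      have "W n = Fu * R" using n1 R1 by (simp add: W_def)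
      then have Wn: "W n = Fv" using Fup by (simp add: R_def)
      have Wlt: "W i < W j" if "i < j" for i j
        using that R1 Fup n1 by (simp add: W_def divide_strict_right_mono)
      have Wpos: "W i > 0" for i using Fup R1 by (simp add: W_def)
      have ex: "\<exists>t. u \<le> t \<and> ereal t < v \<and> F t = W i" if "i < n" for i
      proof -
        have "W i < W n" using Wlt[of i n] that by simp
        then have Wi2: "W i < Fv" using Wn by simp
        have Wi1: "Fu \<le> W i"
        proof (cases "i = 0")
          case True then show ?thesis using W0 by simp
        next
          case False then show ?thesis using Wlt[of 0 i] W0 by simp
        qed
        note Wi = Wi1 Wi2
        obtain y where y: "u \<le> y" "ereal y < v" "W i < F y"
          using approx_point[OF assms(1-4) Wi(2)[unfolded Fv_def]] by (auto simp: F_def)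
        have "continuous_on {\<sigma>..y} F"
          unfolding F_def by (rule F_cont[OF assms(1)]) (use y assms in \<open>auto intro: less_le_trans\<close>)
        then have "continuous_on {u..y} F" by (rule continuous_on_subset) (use assms in auto)
        then obtain t where "t \<ge> u" "t \<le> y" "F t = W i"
          using IVT'[of F u "W i" y] Wi y by (auto simp: Fu_def)
        then show ?thesis using y le_less_trans[of "ereal t" "ereal y" v] by (intro exI[of _ t]) auto
      qed
      then obtain T where T: "\<And>i. i < n \<Longrightarrow> u \<le> T i \<and> ereal (T i) < v \<and> F (T i) = W i"
        by metis
      define T' where "T' i = (if i = 0 then u else T i)" for i
      have T': "u \<le> T' i" "ereal (T' i) < v" "F (T' i) = W i" if "i < n" for i
        using T[OF that] assms(3) W0 by (auto simp: T'_def Fu_def)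
      define p where "p i = (if i < n then ereal (T' i) else v)" for i
      have p0: "p 0 = ereal u" using n1 by (simp add: p_def T'_def)
      have pn: "p n = v" by (simp add: p_def)
      have Tb: "ereal (T' i) \<le> b" if "i < n" for i
        using T'(2)[OF that] assms(4) by (meson less_imp_le order_trans)
      have Ts: "\<sigma> \<le> T' i" if "i < n" for i
        using T'(1)[OF that] assms(2) by simp
      have pb: "p i \<le> b" for i
        using Tb assms(4) by (simp add: p_def)
      have sv: "ereal \<sigma> \<le> v" using assms(2,3) by (meson ereal_less_eq(3) less_imp_le order_trans)
      have ps: "ereal \<sigma> \<le> p i" for i
        using Ts sv by (simp add: p_def)
      have Fmono: "F s \<le> F t" if "\<sigma> \<le> s" "s \<le> t" "ereal t \<le> b" for s t
        using F_mono[OF assms(1) that(1), of "ereal t"] that by (simp add: F_def)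
      have pinc: "p i < p (Suc i)" if "i < n" for i
      proof (cases "Suc i < n")
        case True
        have "T' i < T' (Suc i)"
        proof (rule ccontr)
          assume "\<not> ?thesis"
          then have "F (T' (Suc i)) \<le> F (T' i)"
            using Ts[OF True] Tb[OF that] by (intro Fmono) auto
          then show False using T'[OF that] T'[OF True] Wlt[of i "Suc i"] by simp
        qed
        then show ?thesis using True that by (simp add: p_def)
      next
        case False
        then show ?thesis using that T'[OF that] by (simp add: p_def)
      qed
      have pval: "Om h1 (ereal \<sigma>) (p (Suc i)) = W (Suc i)" if "i < n" for i
      proof (cases "Suc i < n")
        case True then show ?thesis using T'[OF True] by (simp add: p_def F_def)
      next
        case False then have "Suc i = n" using that by simp
        then show ?thesis using Wn by (simp add: p_def Fv_def)
      qed
      have ratio: "W i / W (Suc i) = R powr (-1 / real n)" for i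
      proof -
        have "W i / W (Suc i) = R powr (real i / real n) / R powr (real (Suc i) / real n)"
          using Fup by (simp add: W_def)
        also have "\<dots> = R powr (real i / real n - real (Suc i) / real n)"
          by (simp add: powr_diff)
        also have "real i / real n - real (Suc i) / real n = -1 / real n"
          by (simp add: diff_divide_distrib[symmetric])
        finally show ?thesis .
      qed
      have piece_i: "ennreal (1 - R powr (-1 / real n)) \<le>
          (\<integral>\<^sup>+t. f t * indicator (eivl (p i) (p (Suc i))) t \<partial>lborel)" if "i < n" for i
      proof -
        have pi: "p i = ereal (T' i)" using that by (simp add: p_def)
        have "ennreal ((Om h1 (ereal \<sigma>) (p (Suc i)) - Om h1 (ereal \<sigma>) (ereal (T' i))) / Om h1 (ereal \<sigma>) (p (Suc i)))
          \<le> (\<integral>\<^sup>+t. f t * indicator (eivl (ereal (T' i)) (p (Suc i))) t \<partial>lborel)"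
          unfolding f_def F_def
        proof (rule piece[OF assms(1)])
          show "\<sigma> \<le> T' i" using T'[OF that] assms(2) by simp
          show "ereal (T' i) < p (Suc i)" using pinc[OF that] pi by simp
          show "p (Suc i) \<le> b" by (rule pb)
          show "0 < Om h1 (ereal \<sigma>) (ereal (T' i))" using T'[OF that] Wpos[of i] by (simp add: F_def)
        qed
        moreover have "(Om h1 (ereal \<sigma>) (p (Suc i)) - Om h1 (ereal \<sigma>) (ereal (T' i))) / Om h1 (ereal \<sigma>) (p (Suc i))
            = 1 - R powr (-1 / real n)"
          using pval[OF that] T'[OF that] Wpos[of "Suc i"] ratio[of i]
          by (simp add: F_def diff_divide_distrib)
        ultimately show ?thesis using pi by simp
      qed
      have "ennreal (ln R * R powr (-1 / real n)) \<le> ennreal (real n * (1 - R powr (-1 / real n)))"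
        using powr_ineq[OF R1 n1] by (rule ennreal_leI)
      also have "\<dots> = (\<Sum>i<n. ennreal (1 - R powr (-1 / real n)))"
        using R1 by (simp add: ennreal_mult' powr_less_one ennreal_of_nat_eq_real_of_nat)
      also have "\<dots> \<le> (\<Sum>i<n. \<integral>\<^sup>+t. f t * indicator (eivl (p i) (p (Suc i))) t \<partial>lborel)"
        using piece_i by (intro sum_mono) simp
      also have "\<dots> = (\<integral>\<^sup>+t. (\<Sum>i<n. f t * indicator (eivl (p i) (p (Suc i))) t) \<partial>lborel)"
      proof (rule nn_integral_sum[symmetric])
        fix i show "(\<lambda>t. f t * indicator (eivl (p i) (p (Suc i))) t) \<in> borel_measurable lborel"
          unfolding f_def F_def using F_meas[OF assms(1) ps pb] by simp
      qed
      also have "\<dots> \<le> (\<integral>\<^sup>+t. f t * indicator (eivl (ereal u) v) t \<partial>lborel)"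
      proof (rule nn_integral_mono)
        fix t
        have "(\<Sum>i<n. f t * indicator (eivl (p i) (p (Suc i))) t) = f t * (\<Sum>i<n. indicator (eivl (p i) (p (Suc i))) t)"
          by (simp add: sum_distrib_left)
        also have "\<dots> \<le> f t * indicator (eivl (p 0) (p n)) t"
          using sum_ind_le[of n p t] pinc by (intro mult_left_mono) (auto simp: less_imp_le)
        finally show "(\<Sum>i<n. f t * indicator (eivl (p i) (p (Suc i))) t) \<le> f t * indicator (eivl (ereal u) v) t"
          using p0 pn by simp
      qed
      finally show ?thesis using I_eq by simp
    qed
    have l0: "(\<lambda>n. -1 / real n) \<longlonglongrightarrow> 0"
      by (intro tendsto_divide_0[OF tendsto_const] filterlim_at_top_imp_at_infinity filterlim_real_sequentially)
    have lim: "(\<lambda>n. ln R * R powr (-1 / real n)) \<longlonglongrightarrow> ln R * R powr 0"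
      using R1 by (intro tendsto_mult tendsto_const tendsto_powr[OF tendsto_const l0]) simp
    then have "(\<lambda>n. ennreal (ln R * R powr (-1 / real n))) \<longlonglongrightarrow> ennreal (ln R)"
      using R1 by (intro tendsto_ennrealI) simp
    then have "ennreal (ln R) \<le> ?I"
      by (rule LIMSEQ_le_const2) (use main in \<open>auto intro!: exI[of _ 1]\<close>)
    then show ?thesis by (simp add: R_def Fu_def Fv_def F_def)
  qed
qed

end


lemma ereal_chain_lt:
  fixes s :: "nat \<Rightarrow> ereal"
  assumes "\<forall>j<k. s j < s (Suc j)" "i < j" "j \<le> k"
  shows "s i < s j"
  using assms(2,3)
proof (induction j)
  case 0 then show ?case by simp
next
  case (Suc j)
  have "s j < s (Suc j)" using assms(1) Suc.prems by simp
  then show ?case using Suc by (cases "i = j") auto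
qed

lemma ereal_chain_le:
  fixes s :: "nat \<Rightarrow> ereal"
  assumes "\<forall>j<k. s j < s (Suc j)" "i \<le> j" "j \<le> k"
  shows "s i \<le> s j"
  using ereal_chain_lt[OF assms(1), of i j] assms by (cases "i = j") auto

lemma ham_from_defs:
  assumes H: "hamiltonian a b h1 h2 h3" and LC: "limit_circle a b h1 h2"
  shows "ham a b h1 h2 h3"
proof -
  let ?S = "eivl (ereal a) b"
  have ab: "ereal a < b" and meas: "\<And>h. h \<in> {h1, h2, h3} \<Longrightarrow> set_borel_measurable lborel ?S h"
    and Q: "AE t in lborel. t \<in> ?S \<longrightarrow> (\<forall>x y::real. 0 \<le> h1 t * x^2 + 2 * h3 t * x * y + h2 t * y^2)"
    and nz: "{t \<in> ?S. h1 t = 0 \<and> h2 t = 0 \<and> h3 t = 0} \<in> null_sets lborel"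
    using H unfolding hamiltonian_def by auto
  have psd: "AE t in lborel. t \<in> ?S \<longrightarrow> 0 \<le> h1 t \<and> 0 \<le> h2 t \<and> (h3 t)^2 \<le> h1 t * h2 t"
    using Q
  proof eventually_elim
    case (elim t)
    show ?case
    proof
      assume tS: "t \<in> ?S"
      have "0 \<le> x^2 * h1 t + 2 * x * y * h3 t + y^2 * h2 t" for x y
      proof -
        have eq: "x^2 * h1 t + 2 * x * y * h3 t + y^2 * h2 t = h1 t * x^2 + 2 * h3 t * x * y + h2 t * y^2"
          by (simp add: algebra_simps)
        have "0 \<le> h1 t * x^2 + 2 * h3 t * x * y + h2 t * y^2" using elim tS by blast
        then show ?thesis using eq by argo
      qed
      then show "0 \<le> h1 t \<and> 0 \<le> h2 t \<and> (h3 t)^2 \<le> h1 t * h2 t"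
        using quad_psd[of "h1 t" "h3 t" "h2 t"] by blast
    qed
  qed
  have m: "(\<lambda>t. indicator ?S t * h t) \<in> borel_measurable lborel" if "h \<in> {h1, h2, h3}" for h
    using meas[OF that] by (simp add: set_borel_measurable_def)
  have msum: "(\<lambda>t. indicator ?S t * (h1 t + h2 t)) \<in> borel_measurable lborel"
    using m[of h1] m[of h2] by (simp add: distrib_left)
  have isum: "integrable lborel (\<lambda>t. indicator ?S t * (h1 t + h2 t))"
  proof (rule integrableI_bounded[OF msum])
    have "(\<integral>\<^sup>+t. ennreal (norm (indicator ?S t * (h1 t + h2 t))) \<partial>lborel)
        = (\<integral>\<^sup>+t\<in>?S. ennreal (h1 t + h2 t) \<partial>lborel)"
    proof (rule nn_integral_cong_AE)
      show "AE t in lborel. ennreal (norm (indicator ?S t * (h1 t + h2 t))) = ennreal (h1 t + h2 t) * indicator ?S t"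
        using psd by eventually_elim (auto simp: indicator_def)
    qed
    also have "\<dots> < \<infinity>" using LC by (simp add: limit_circle_def)
    finally show "(\<integral>\<^sup>+t. ennreal (norm (indicator ?S t * (h1 t + h2 t))) \<partial>lborel) < \<infinity>" .
  qed
  have ih: "set_integrable lborel ?S h" if "h \<in> {h1, h2, h3}" for h
    unfolding set_integrable_def
  proof (rule Bochner_Integration.integrable_bound[OF isum])
    show "(\<lambda>t. indicator ?S t *\<^sub>R h t) \<in> borel_measurable lborel" using m[OF that] by simp
    show "AE t in lborel. norm (indicator ?S t *\<^sub>R h t) \<le> norm (indicator ?S t * (h1 t + h2 t))"
      using psd
    proof eventually_elim
      case (elim t)
      show ?case
      proof (cases "t \<in> ?S")
        case True
        then have p: "0 \<le> h1 t" "0 \<le> h2 t" "(h3 t)^2 \<le> h1 t * h2 t" using elim by auto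
        have m0: "0 \<le> h1 t * h2 t" using p by simp
        have "(h1 t + h2 t)^2 = (h1 t)^2 + (h2 t)^2 + 2 * (h1 t * h2 t)" by (simp add: power2_sum)
        then have "(h3 t)^2 \<le> (h1 t + h2 t)^2" using p(3) m0 zero_le_power2[of "h1 t"] zero_le_power2[of "h2 t"]
          by linarith
        then have "\<bar>h3 t\<bar> \<le> \<bar>h1 t + h2 t\<bar>" by (simp add: abs_le_square_iff)
        then show ?thesis using True p that by auto
      qed simp
    qed
  qed
  show ?thesis
    by (unfold_locales) (use ab ih psd nz in auto)
qed

theorem lemma5p7:
  fixes a :: real and b :: ereal and h1 h2 h3 :: "real \<Rightarrow> real"
    and c r :: real and that :: "real \<Rightarrow> real" and shat :: "real \<Rightarrow> real \<Rightarrow> real"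
    and k :: nat and s :: "nat \<Rightarrow> ereal"
  assumes "hamiltonian a b h1 h2 h3"
    and "limit_circle a b h1 h2"
    and "definite a b h1 h2 h3"
    and "c > 0"
    and "compatible_pair a b h1 h2 h3 (sqrt (c / detOm h1 h2 h3 (ereal a) b)) c c that shat"
    and "r > sqrt (c / detOm h1 h2 h3 (ereal a) b)"
    and "k \<ge> 1"
    and "ereal a \<le> s 0"
    and "\<forall>j<k. s j < s (Suc j)"
    and "s k \<le> b"
    and "\<forall>j\<in>{1..k}. detOm h1 h2 h3 (s (j - 1)) (s j) \<ge> c / r^2"
  shows "(\<integral>\<^sup>+ t \<in> eivl (s 1) (s k). ennreal (h1 t / Om h1 (ereal (shat t r)) (ereal t)) \<partial>lborel)
           \<ge> ennreal (real k * ln 2 - (ln r + ln (trOm h1 h2 (s 0) (s k) / sqrt c)))"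
proof -
  interpret ham a b h1 h2 h3 by (rule ham_from_defs[OF assms(1,2)])
  let ?r0 = "sqrt (c / detOm h1 h2 h3 (ereal a) b)"
  let ?det = "detOm h1 h2 h3"
  define d where "d = c / r^2"

  have "0 \<le> ?det (ereal a) b" using Om_psd[OF order_refl order_refl] by (simp add: detOm_def)
  then have "0 \<le> ?r0" using assms(4) by simp
  then have rpos: "r > 0" using assms(6) by linarith
  have dpos: "d > 0" using assms(4) rpos by (simp add: d_def)
  have cp1: "a < that r \<and> ereal (that r) < b \<and> ?det (ereal a) (ereal (that r)) = d"
    using assms(5,6) by (simp add: compatible_pair_def d_def)
  have cp2: "a \<le> shat t r \<and> shat t r \<le> t \<and> ?det (ereal (shat t r)) (ereal t) = d"
    if "that r \<le> t" "ereal t < b" for t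
    using assms(5,6) that by (simp add: compatible_pair_def d_def)
  have sdet: "d \<le> ?det (s (j - 1)) (s j)" if "1 \<le> j" "j \<le> k" for j
    using assms(11) that by (simp add: d_def)
  have slt: "s i < s j" if "i < j" "j \<le> k" for i j using ereal_chain_lt[OF assms(9) that] .
  have sle: "s i \<le> s j" if "i \<le> j" "j \<le> k" for i j using ereal_chain_le[OF assms(9) that] .
  have sa: "ereal a \<le> s i" if "i \<le> k" for i using sle[of 0 i] that assms(8) by (meson order_trans zero_le)
  have sb: "s i \<le> b" if "i \<le> k" for i using sle[of i k] that assms(10) by (meson order_trans order_refl)
  have sreal: "ereal (real_of_ereal (s i)) = s i" if "i < k" for i
  proof -
    have "s i < s k" using slt[of i k] that by simp
    then have "s i \<noteq> \<infinity>" by auto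
    moreover have "s i \<noteq> -\<infinity>" using sa[of i] that by auto
    ultimately show ?thesis by (cases "s i") auto
  qed
  have T1: "ereal (that r) \<le> s 1"
  proof (rule ccontr)
    assume "\<not> ?thesis"
    then have lt: "s 1 < ereal (that r)" by simp
    have "?det (s 0) (s 1) \<le> ?det (ereal a) (s 1)"
      using det_mono_left[OF order_refl assms(8) sle[of 0 1] sb[of 1]] assms(7) by simp
    then have ge: "d \<le> ?det (ereal a) (s 1)" using sdet[of 1] assms(7) by simp
    have "?det (ereal a) (s 1) < ?det (ereal a) (ereal (that r))"
      by (rule det_strict_right[OF order_refl sa[of 1] lt]) (use assms(7) cp1 ge dpos in auto)
    then show False using cp1 ge by simp
  qed
  have shat_bound: "0 < Om h1 (ereal (shat t r)) (ereal t) \<and> Om h1 (ereal (shat t r)) (ereal t) \<le> Om h1 (s (j - 1)) (ereal t)"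
    if j: "1 \<le> j" "j < k" and t: "t \<in> eivl (s j) (s (Suc j))" for j t
  proof -
    have t1: "s j < ereal t" "ereal t < s (Suc j)" using t by (auto simp: eivl_def)
    have tb: "ereal t < b" using t1(2) sb[of "Suc j"] j by (meson less_le_trans Suc_leI)
    have "ereal (that r) \<le> ereal t"
      using T1 sle[of 1 j] j t1(1) by (meson less_imp_le order_trans less_imp_le_nat)
    then obtain cs: "a \<le> shat t r" "shat t r \<le> t" "?det (ereal (shat t r)) (ereal t) = d"
      using cp2[of t] tb by auto
    let ?\<sigma> = "ereal (shat t r)"
    have jm: "j - 1 \<le> k" "j - 1 < k" using j by auto
    have d1: "d \<le> ?det (s (j - 1)) (s j)" using sdet[of j] j by simp
    have d2: "?det (s (j - 1)) (s j) \<le> ?det (s (j - 1)) (ereal t)"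
      by (rule det_mono_right[OF sa[OF jm(1)] sle[of "j - 1" j]]) (use j t1 tb in auto)
    have sig: "s (j - 1) \<le> ?\<sigma>"
    proof (rule ccontr)
      assume "\<not> ?thesis"
      then have lt: "?\<sigma> < s (j - 1)" by simp
      have "?det (s (j - 1)) (ereal t) < ?det ?\<sigma> (ereal t)"
      proof (rule det_strict_left[OF _ lt])
        show "ereal a \<le> ?\<sigma>" using cs by simp
        show "s (j - 1) \<le> ereal t" using sle[of "j - 1" j] j t1 by (meson less_imp_le order_trans diff_le_self less_imp_le_nat)
        show "ereal t \<le> b" using tb by simp
        show "0 < ?det (s (j - 1)) (ereal t)" using d1 d2 dpos by simp
      qed
      then show False using cs d1 d2 by simp
    qed
    have pos: "0 < Om h1 ?\<sigma> (ereal t)"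
      using Om1_pos(1)[of ?\<sigma> "ereal t"] cs dpos tb by simp
    have "Om h1 ?\<sigma> (ereal t) \<le> Om h1 (s (j - 1)) (ereal t)"
      by (rule Om_mono[OF sa[OF jm(1)] sig]) (use cs tb in auto)
    then show ?thesis using pos by simp
  qed
  define A where "A j = Om h1 (s (j - 1)) (s j)" for j
  define B where "B = Om h2 (s (k - 1)) (s k)"
  have Apos: "A j > 0" if "j \<in> {1..k}" for j
  proof -
    have "0 < ?det (s (j - 1)) (s j)" using sdet[of j] that dpos by auto
    then show ?thesis using Om1_pos(1)[OF sa sb[of j]] that by (auto simp: A_def)
  qed
  have Bpos: "B > 0" and AB: "A k * B \<ge> c / r^2"
  proof -
    have dk: "d \<le> ?det (s (k - 1)) (s k)" using sdet[of k] assms(7) by simp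
    then show "B > 0" using Om1_pos(2)[OF sa[of "k - 1"] sb[of k]] dpos by (simp add: B_def)
    have "?det (s (k - 1)) (s k) \<le> A k * B"
      by (simp add: detOm_def A_def B_def)
    then show "A k * B \<ge> c / r^2" using dk by (simp add: d_def)
  qed
  have trge: "trOm h1 h2 (s 0) (s k) \<ge> A 1 + B"
  proof -
    have "Om h1 (s 0) (s 1) \<le> Om h1 (s 0) (s k)"
      by (rule Om_mono[OF assms(8) order_refl]) (use sle[of 1 k] sle[of 0 1] assms(7,10) in auto)
    then have "A 1 \<le> Om h1 (s 0) (s k)" by (simp add: A_def)
    moreover have "B \<le> Om h2 (s 0) (s k)"
      unfolding B_def by (rule Om_mono[OF assms(8)]) (use sle[of 0 "k - 1"] sle[of "k - 1" k] assms(7,10) in auto)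
    ultimately show ?thesis by (simp add: trOm_def)
  qed
  have fin: "real k * ln 2 - (ln r + ln (trOm h1 h2 (s 0) (s k) / sqrt c))
      \<le> (\<Sum>j\<in>{1..<k}. ln ((A j + A (Suc j)) / A j))"
    by (rule final_ineq[OF assms(7) _ Bpos AB trge rpos assms(4)]) (use Apos in auto)
  define g where "g j t = ennreal (h1 t / Om h1 (s (j - 1)) (ereal t)) * indicator (eivl (s j) (s (Suc j))) t" for j t
  have gbound: "ennreal (ln ((A j + A (Suc j)) / A j)) \<le> integral\<^sup>N lborel (g j)" if j: "j \<in> {1..<k}" for j
  proof -
    define \<sigma> where "\<sigma> = real_of_ereal (s (j - 1))"
    define u where "u = real_of_ereal (s j)"
    have jk: "j - 1 < k" using j by auto
    have jk2: "j - 1 \<le> k" "j \<le> k" "Suc j \<le> k" "j - 1 \<le> j" "j < Suc j" "j < k" using j by auto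
    have se: "ereal \<sigma> = s (j - 1)" using sreal[OF jk] by (simp add: \<sigma>_def)
    have ue: "ereal u = s j" using sreal[of j] j by (simp add: u_def)
    have "ennreal (ln (Om h1 (ereal \<sigma>) (s (Suc j)) / Om h1 (ereal \<sigma>) (ereal u)))
      \<le> (\<integral>\<^sup>+t. ennreal (h1 t / Om h1 (ereal \<sigma>) (ereal t)) * indicator (eivl (ereal u) (s (Suc j))) t \<partial>lborel)"
    proof (rule log_bound)
      show "ereal a \<le> ereal \<sigma>" using se sa[OF jk2(1)] by simp
      have "ereal \<sigma> \<le> ereal u" using se ue sle[OF jk2(4) jk2(2)] by simp
      then show "\<sigma> \<le> u" by simp
      show "ereal u < s (Suc j)" using ue slt[OF jk2(5) jk2(3)] by simp
      show "s (Suc j) \<le> b" using sb[OF jk2(3)] by simp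
      have "j \<in> {1..k}" using j by auto
      then show "0 < Om h1 (ereal \<sigma>) (ereal u)" using Apos[of j] se ue by (simp add: A_def)
    qed
    moreover have "Om h1 (ereal \<sigma>) (s (Suc j)) = A j + A (Suc j)"
    proof -
      have "Om h1 (s (j - 1)) (s (Suc j)) = Om h1 (s (j - 1)) (s j) + Om h1 (s j) (s (Suc j))"
        by (rule Om_add) (use sa[OF jk2(1)] sle[OF jk2(4) jk2(2)] sle[of j "Suc j"] jk2 sb[OF jk2(3)] in auto)
      then show ?thesis unfolding se by (simp add: A_def)
    qed
    ultimately show ?thesis using se ue by (simp add: g_def[abs_def] A_def)
  qed
  have gmeas: "g j \<in> borel_measurable lborel" if j: "j \<in> {1..<k}" for j
  proof -
    have jk: "j - 1 < k" using j by auto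
    have jk2: "j - 1 \<le> k" "j \<le> k" "Suc j \<le> k" "j - 1 \<le> j" using j by auto
    have se: "ereal (real_of_ereal (s (j - 1))) = s (j - 1)" using sreal[OF jk] by simp
    have "ereal a \<le> ereal (real_of_ereal (s (j - 1)))" using se sa[OF jk2(1)] by simp
    moreover have "ereal (real_of_ereal (s (j - 1))) \<le> s j" using se sle[OF jk2(4) jk2(2)] by simp
    ultimately have "(\<lambda>t. ennreal (h1 t / Om h1 (ereal (real_of_ereal (s (j - 1)))) (ereal t)) * indicator (eivl (s j) (s (Suc j))) t) \<in> borel_measurable lborel"
      using F_meas sb[OF jk2(3)] by blast
    then show ?thesis unfolding se g_def[abs_def] by simp
  qed
  have "ennreal (real k * ln 2 - (ln r + ln (trOm h1 h2 (s 0) (s k) / sqrt c)))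
      \<le> ennreal (\<Sum>j\<in>{1..<k}. ln ((A j + A (Suc j)) / A j))"
    using fin by (rule ennreal_leI)
  also have "\<dots> = (\<Sum>j\<in>{1..<k}. ennreal (ln ((A j + A (Suc j)) / A j)))"
  proof (rule sum_ennreal[symmetric])
    fix j assume "j \<in> {1..<k}"
    then have "A j > 0" "A (Suc j) > 0" using Apos by auto
    then show "0 \<le> ln ((A j + A (Suc j)) / A j)" by simp
  qed
  also have "\<dots> \<le> (\<Sum>j\<in>{1..<k}. integral\<^sup>N lborel (g j))"
    by (rule sum_mono) (rule gbound)
  also have "\<dots> = (\<integral>\<^sup>+t. (\<Sum>j\<in>{1..<k}. g j t) \<partial>lborel)"
    by (rule nn_integral_sum[symmetric]) (rule gmeas)
  also have "\<dots> \<le> (\<integral>\<^sup>+ t \<in> eivl (s 1) (s k). ennreal (h1 t / Om h1 (ereal (shat t r)) (ereal t)) \<partial>lborel)"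
  proof (rule nn_integral_mono_AE)
    show "AE t in lborel. (\<Sum>j\<in>{1..<k}. g j t) \<le> ennreal (h1 t / Om h1 (ereal (shat t r)) (ereal t)) * indicator (eivl (s 1) (s k)) t"
      using AE_nonneg
    proof eventually_elim
      case (elim t)
      show ?case
      proof (cases "\<exists>j\<in>{1..<k}. t \<in> eivl (s j) (s (Suc j))")
        case False
        then have "(\<Sum>j\<in>{1..<k}. g j t) = 0" by (simp add: g_def)
        then show ?thesis by simp
      next
        case True
        then obtain j where j: "j \<in> {1..<k}" "t \<in> eivl (s j) (s (Suc j))" by blast
        have t1: "s j < ereal t" "ereal t < s (Suc j)" using j by (auto simp: eivl_def)
        have other: "t \<notin> eivl (s i) (s (Suc i))" if "i \<in> {1..<k}" "i \<noteq> j" for i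
        proof
          assume ti: "t \<in> eivl (s i) (s (Suc i))"
          then have t2: "s i < ereal t" "ereal t < s (Suc i)" by (auto simp: eivl_def)
          show False
          proof (cases "i < j")
            case True
            then have "s (Suc i) \<le> s j" using sle[of "Suc i" j] j by simp
            then show False using t1 t2 by simp
          next
            case False
            then have "s (Suc j) \<le> s i" using sle[of "Suc j" i] that \<open>i \<noteq> j\<close> by simp
            then show False using t1 t2 by simp
          qed
        qed
        have "(\<Sum>i\<in>{1..<k}. g i t) = g j t + (\<Sum>i\<in>{1..<k} - {j}. g i t)"
          using j by (simp add: sum.remove)
        also have "(\<Sum>i\<in>{1..<k} - {j}. g i t) = 0"
          using other by (simp add: g_def)
        finally have sumeq: "(\<Sum>i\<in>{1..<k}. g i t) = g j t" by simp
        have tin: "t \<in> eivl (s 1) (s k)"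
        proof -
          have "s 1 \<le> s j" using sle[of 1 j] j by simp
          moreover have "s (Suc j) \<le> s k" using sle[of "Suc j" k] j by simp
          ultimately show ?thesis using t1 by (auto simp: eivl_def intro: le_less_trans less_le_trans)
        qed
        have tab: "t \<in> eivl a b" using tin eivl_sub[OF sa[of 1] sb[of k]] assms(7) by auto
        have h0: "0 \<le> h1 t" using elim tab by simp
        have sb2: "0 < Om h1 (ereal (shat t r)) (ereal t)" "Om h1 (ereal (shat t r)) (ereal t) \<le> Om h1 (s (j - 1)) (ereal t)"
          using shat_bound[of j t] j by auto
        have "h1 t / Om h1 (s (j - 1)) (ereal t) \<le> h1 t / Om h1 (ereal (shat t r)) (ereal t)"
          using sb2 h0 by (intro divide_left_mono) auto
        then have "g j t \<le> ennreal (h1 t / Om h1 (ereal (shat t r)) (ereal t)) * indicator (eivl (s 1) (s k)) t"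
          using j tin by (simp add: g_def ennreal_leI)
        then show ?thesis using sumeq by simp
      qed
    qed
  qed
  finally show ?thesis .
qed


end
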